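(* Let $\vec I^{\mathcal M}$ be the multipointed $d$-space with underlying space $[0,1]$, set of states $\{0,1\}$, execution paths from $0$ to $1$ exactly the nondecreasing surjective continuous maps $[0,1]\to[0,1]$ (the set $\mathcal M(1,1)$), and no other execution paths. Then the space \[ \mathbb P_{0,1}\vec I^{\mathcal M}=\mathrm{coeq}\big(\mathbb P^{top}_{0,1}\vec I^{\mathcal M}\times\mathcal G(1,1)\rightrightarrows\mathbb P^{top}_{0,1}\vec I^{\mathcal M}\big), \] where the two maps are $(c,\phi)\mapsto c$ and $(c,\phi)\mapsto c\circ\phi$, is not a singleton.
   Context: $\mathbf{Top}$: $\Delta$-generated spaces; $\mathbb P^{top}_{0,1}\vec I^{\mathcal M}\subset\mathbf{TOP}([0,1],[0,1])$ carries the $\Delta$-kelleyfication of the relative compact-open topology, and the coequalizer is taken in $\mathbf{Top}$. $\mathcal G(1,1)$ is the space of nondecreasing homeomorphisms of $[0,1]$. A multipointed $d$-space is a triple $(|X|,X^0,\mathbb P^{top}X)$ of a space, a set of states, and a set of continuous paths $[0,1]\to|X|$ between states, closed under precomposition with elements of $\mathcal G(1,1)$ and under normalized composition. *)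

theory Defs
  imports "HOL-Analysis.Analysis"
begin

text \<open>Maps are represented as real => real; only their values on [0,1] matter
  (see the relation below, which identifies maps agreeing on [0,1]).\<close>
definition M11 :: "(real \<Rightarrow> real) set" where
  "M11 = {c. continuous_on {0..1} c \<and> mono_on {0..1} c \<and> c ` {0..1} = {0..1}}"

definition G11 :: "(real \<Rightarrow> real) set" where
  "G11 = {\<phi>. mono_on {0..1} \<phi> \<and> (\<exists>\<psi>. homeomorphism {0..1} {0..1} \<phi> \<psi>)}"

text \<open>The pairs identified by the two parallel maps (c,phi) |-> c and (c,phi) |-> c o phi,
  with equality of paths meaning equality as maps on [0,1].\<close>
definition reparam_rel :: "((real \<Rightarrow> real) \<times> (real \<Rightarrow> real)) set" where
  "reparam_rel = {(c, d). c \<in> M11 \<and> d \<in> M11 \<and>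
      (\<exists>\<phi>\<in>G11. \<forall>t\<in>{0..1}. d t = c (\<phi> t))}"

text \<open>Underlying set of the coequalizer: quotient of M(1,1) by the equivalence
  relation generated by reparam_rel.\<close>
definition P01_IM :: "(real \<Rightarrow> real) set set" where
  "P01_IM = M11 // ((reparam_rel \<union> reparam_rel\<inverse>)\<^sup>*)"

end

theory Submission
  imports Defs
begin

lemma rel_inj:
  assumes "(c, d) \<in> reparam_rel"
  shows "inj_on c {0..1} \<longleftrightarrow> inj_on d {0..1}"
proof -
  obtain \<phi> \<psi> where h: "homeomorphism {0..1} {0..1} \<phi> \<psi>" and d: "\<forall>t\<in>{0..1}. d t = c (\<phi> t)"
    using assms unfolding reparam_rel_def G11_def by blast
  have p1: "\<And>t. t \<in> {0..1::real} \<Longrightarrow> \<phi> t \<in> {0..1}" using h unfolding homeomorphism_def by blast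
  have p2: "\<And>t. t \<in> {0..1::real} \<Longrightarrow> \<psi> t \<in> {0..1}" using h unfolding homeomorphism_def by blast
  have p3: "\<And>t. t \<in> {0..1::real} \<Longrightarrow> \<phi> (\<psi> t) = t" using h unfolding homeomorphism_def by blast
  have p4: "\<And>t. t \<in> {0..1::real} \<Longrightarrow> \<psi> (\<phi> t) = t" using h unfolding homeomorphism_def by blast
  show ?thesis
  proof
    assume "inj_on c {0..1}"
    note ic = this
    show "inj_on d {0..1}"
    proof (rule inj_onI)
      fix x y assume x: "x \<in> {0..1::real}" and y: "y \<in> {0..1::real}" and e: "d x = d y"
      have "c (\<phi> x) = c (\<phi> y)" using d x y e by simp
      then have "\<phi> x = \<phi> y" by (rule inj_onD[OF ic _ p1[OF x] p1[OF y]])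
      then have "\<psi> (\<phi> x) = \<psi> (\<phi> y)" by simp
      then show "x = y" using p4[OF x] p4[OF y] by simp
    qed
  next
    assume i: "inj_on d {0..1}"
    have cd: "\<And>s. s \<in> {0..1} \<Longrightarrow> c s = d (\<psi> s)" using d p2 p3 by metis
    show "inj_on c {0..1}"
    proof (rule inj_onI)
      fix x y assume x: "x \<in> {0..1::real}" and y: "y \<in> {0..1::real}" and e: "c x = c y"
      have "d (\<psi> x) = d (\<psi> y)" using cd[OF x] cd[OF y] e by simp
      then have "\<psi> x = \<psi> y" by (rule inj_onD[OF i _ p2[OF x] p2[OF y]])
      then have "\<phi> (\<psi> x) = \<phi> (\<psi> y)" by simp
      then show "x = y" using p3[OF x] p3[OF y] by simp
    qed
  qed
qed

lemma f_M11: "(\<lambda>t::real. min 1 (2*t)) \<in> M11"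
proof -
  have "continuous_on {0..1} (\<lambda>t::real. min 1 (2*t))" by (intro continuous_intros)
  moreover have "mono_on {0..1} (\<lambda>t::real. min 1 (2*t))" by (auto simp: mono_on_def)
  moreover have "(\<lambda>t::real. min 1 (2*t)) ` {0..1} = {0..1}"
  proof
    show "(\<lambda>t::real. min 1 (2*t)) ` {0..1} \<subseteq> {0..1}" by auto
    show "{0..1} \<subseteq> (\<lambda>t::real. min 1 (2*t)) ` {0..1}"
    proof
      fix y :: real assume "y \<in> {0..1}"
      then have "y = min 1 (2*(y/2))" "y/2 \<in> {0..1}" by auto
      then show "y \<in> (\<lambda>t::real. min 1 (2*t)) ` {0..1}" by blast
    qed
  qed
  ultimately show ?thesis unfolding M11_def by blast
qed

lemma id_M11: "(\<lambda>t::real. t) \<in> M11"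
  unfolding M11_def by (auto simp: mono_on_def intro: continuous_intros)

theorem proposition3p7:
  shows "\<not> (\<exists>p. P01_IM = {p})"
proof
  assume "\<exists>p. P01_IM = {p}"
  then obtain p where P: "P01_IM = {p}" by blast
  define Q where "Q = (reparam_rel \<union> reparam_rel\<inverse>)\<^sup>*"
  define f where "f = (\<lambda>t::real. min 1 (2*t))"
  have "Q``{\<lambda>t. t} \<in> P01_IM"
    unfolding P01_IM_def Q_def using id_M11 by (rule quotientI)
  moreover have "Q``{f} \<in> P01_IM"
    unfolding P01_IM_def Q_def f_def using f_M11 by (rule quotientI)
  ultimately have e: "Q``{\<lambda>t. t} = Q``{f}" unfolding P by (simp only: singleton_iff)
  have "f \<in> Q``{f}" unfolding Q_def by simp
  then have "f \<in> Q``{\<lambda>t. t}" using e by simp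
  then have "((\<lambda>t. t), f) \<in> Q" by simp
  then have "inj_on f {0..1}"
    unfolding Q_def
  proof (induction rule: rtrancl_induct)
    case base then show ?case by simp
  next
    case (step y z)
    from step(2) have "(y, z) \<in> reparam_rel \<or> (z, y) \<in> reparam_rel" by blast
    then show ?case using rel_inj[of y z] rel_inj[of z y] step(3) by blast
  qed
  moreover have "f 1 = f (1/2)" unfolding f_def by simp
  ultimately have "(1::real) = 1/2" by (rule inj_onD) auto
  then show False by simp
qed

end
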